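(* Let $q\ge2$ be fixed and let $r^*(n)$ be the minimum redundancy of a classical $(n,2;\mathcal{D}_1)_q$-reconstruction code in $\Sigma_q^n$. Then, as $n\to\infty$, $$\log_q\log_q n-\log_q2-o(1)\le r^*(n)\le\log_q\log_q n+\min\{\log_q(q-1)-\log_q2,0\}+o(1).$$
   Context: $\Sigma_q=\{0,\dots,q-1\}$. $\mathcal{D}_1(\boldsymbol{x})$ is the set of sequences obtained from $\boldsymbol{x}\in\Sigma_q^n$ by deleting exactly one symbol; $\mathcal{C}\subseteq\Sigma_q^n$ is a classical $(n,2;\mathcal{D}_1)_q$-reconstruction code if $|\mathcal{D}_1(\boldsymbol{x})\cap\mathcal{D}_1(\boldsymbol{y})|\le1$ for all distinct $\boldsymbol{x},\boldsymbol{y}\in\mathcal{C}$. Redundancy: $r(\mathcal{C})=n-\log_q|\mathcal{C}|$. *)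

theory Defs
  imports Complex_Main
begin

definition words :: "nat \<Rightarrow> nat \<Rightarrow> nat list set" where
  "words q n = {x. length x = n \<and> set x \<subseteq> {..<q}}"

definition del1 :: "nat list \<Rightarrow> nat list set" where
  "del1 x = {take i x @ drop (Suc i) x | i. i < length x}"

definition recon_code :: "nat \<Rightarrow> nat \<Rightarrow> nat list set \<Rightarrow> bool" where
  "recon_code q n C \<longleftrightarrow> C \<subseteq> words q n \<and>
     (\<forall>x\<in>C. \<forall>y\<in>C. x \<noteq> y \<longrightarrow> card (del1 x \<inter> del1 y) \<le> 1)"

definition redundancy :: "nat \<Rightarrow> nat \<Rightarrow> nat list set \<Rightarrow> real" where
  "redundancy q n C = real n - log q (real (card C))"

definition min_redundancy :: "nat \<Rightarrow> nat \<Rightarrow> real" where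
  "min_redundancy q n = Inf {redundancy q n C | C. recon_code q n C \<and> C \<noteq> {}}"

end

theory Submission
  imports Defs "HOL-Real_Asymp.Real_Asymp"
begin

definition dl :: "nat list \<Rightarrow> nat \<Rightarrow> nat list" where
  "dl x i = take i x @ drop (Suc i) x"

lemma dl_length: "i < length x \<Longrightarrow> length (dl x i) = length x - 1"
  unfolding dl_def by auto

lemma dl_nth: "i < length x \<Longrightarrow> t < length x - 1 \<Longrightarrow>
   dl x i ! t = (if t < i then x ! t else x ! Suc t)"
  unfolding dl_def by (auto simp: nth_append min_def)

lemma del1_eq: "del1 x = {dl x i | i. i < length x}"
  unfolding del1_def dl_def by auto

lemma finite_del1: "finite (del1 x)"
proof -
  have "del1 x = (\<lambda>i. dl x i) ` {..<length x}" unfolding del1_eq by auto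
  thus ?thesis by simp
qed

lemma dl_eq_pointwise:
  assumes "length x = n" "length y = n" "i < n" "j < n" "dl x i = dl y j" "t < n - 1"
  shows "(if t < i then x ! t else x ! Suc t) = (if t < j then y ! t else y ! Suc t)"
  using dl_nth[of i x t] dl_nth[of j y t] assms by auto

lemma dl_eqI:
  assumes "length x = n" "length y = n" "i < n" "j < n"
    and "\<And>t. t < n - 1 \<Longrightarrow> (if t < i then x ! t else x ! Suc t) = (if t < j then y ! t else y ! Suc t)"
  shows "dl x i = dl y j"
  by (rule nth_equalityI) (use assms dl_nth dl_length in auto)

lemma dl_const_stretch:
  assumes "length x = n" "i \<le> p" "p < n" "\<And>t. i \<le> t \<Longrightarrow> t < p \<Longrightarrow> x ! Suc t = x ! t"
  shows "dl x i = dl x p"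
proof (rule dl_eqI[OF assms(1) assms(1)])
  show "i < n" using assms by simp
  show "p < n" by fact
  fix t assume "t < n - 1"
  have c: "x ! t = x ! p" if "i \<le> t" "t \<le> p" for t
    using that
  proof (induction "p - t" arbitrary: t)
    case 0 thus ?case by simp
  next
    case (Suc k)
    hence "x ! Suc t = x ! p" using Suc.hyps(1)[of "Suc t"] by simp
    moreover have "t < p" using Suc.hyps(2) by simp
    hence "x ! Suc t = x ! t" using Suc.prems assms(4)[of t] by blast
    ultimately show ?case by simp
  qed
  show "(if t < i then x ! t else x ! Suc t) = (if t < p then x ! t else x ! Suc t)"
  proof (cases "t < i")
    case True thus ?thesis using assms by simp
  next
    case False
    show ?thesis
    proof (cases "t < p")
      case True
      then show ?thesis using False c[of t] c[of "Suc t"] by simp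
    next
      case False2: False
      then show ?thesis using False by simp
    qed
  qed
qed

lemma typeR:
  assumes lx: "length x = n" and ly: "length y = n" and ij: "i \<le> j" "j < n"
    and e: "dl x i = dl y j"
    and ps: "p < n" "s < n" "x ! p \<noteq> y ! p" "x ! s \<noteq> y ! s"
    and lp: "\<And>t. t < p \<Longrightarrow> x ! t = y ! t"
  shows "dl x i = dl x p \<and> (\<forall>t. p \<le> t \<longrightarrow> t < s \<longrightarrow> x ! Suc t = y ! t)"
proof -
  have pw: "(if t < i then x ! t else x ! Suc t) = (if t < j then y ! t else y ! Suc t)"
    if "t < n - 1" for t
    using dl_eq_pointwise[OF lx ly _ ij(2) e that] ij by simp
  have R1: "x ! t = y ! t" if "t < i" for t using pw[of t] that ij by auto
  have R2: "x ! Suc t = y ! t" if "i \<le> t" "t < j" for t using pw[of t] that ij by auto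
  have R3: "x ! t = y ! t" if h: "j < t" "t < n" for t
  proof -
    obtain u where u: "t = Suc u" using gr0_implies_Suc[of t] h(1) by auto
    show ?thesis using pw[of u] h u ij by auto
  qed
  have ip: "i \<le> p" using R1 ps by (meson not_le)
  have pj: "p \<le> j" using R3 ps by (meson not_le)
  have sj: "s \<le> j" using R3 ps by (meson not_le)
  have "dl x i = dl x p"
    by (rule dl_const_stretch[OF lx ip ps(1)]) (use R2 lp pj in auto)
  moreover have "\<forall>t. p \<le> t \<longrightarrow> t < s \<longrightarrow> x ! Suc t = y ! t"
    using R2 ip sj by auto
  ultimately show ?thesis by blast
qed

lemma confusable_structure:
  assumes lx: "length x = n" and ly: "length y = n" and xy: "x \<noteq> y"
    and c: "\<not> card (del1 x \<inter> del1 y) \<le> 1"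
  shows "\<exists>p s. p < s \<and> s < n \<and> x ! p \<noteq> y ! p \<and>
     (\<forall>t. t < n \<longrightarrow> (t < p \<or> s < t) \<longrightarrow> x ! t = y ! t) \<and>
     (\<forall>t. p \<le> t \<longrightarrow> t < s \<longrightarrow> x ! Suc t = y ! t \<and> y ! Suc t = x ! t)"
proof -
  have fin: "finite (del1 x \<inter> del1 y)" using finite_del1 by blast
  obtain z1 z2 where z: "z1 \<in> del1 x \<inter> del1 y" "z2 \<in> del1 x \<inter> del1 y" "z1 \<noteq> z2"
    using c card_le_Suc0_iff_eq[OF fin] by auto
  have ex: "\<exists>t. t < n \<and> x ! t \<noteq> y ! t"
  proof (rule ccontr)
    assume "\<not> ?thesis"
    hence "x = y" using lx ly by (intro nth_equalityI) auto
    thus False using xy by simp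
  qed
  define P where "P t \<longleftrightarrow> t < n \<and> x ! t \<noteq> y ! t" for t
  define p where "p = (LEAST t. P t)"
  define s where "s = (GREATEST t. P t)"
  have Pp: "P p" unfolding p_def using ex P_def by (metis LeastI)
  have Ps: "P s" unfolding s_def using ex P_def
    by (metis (no_types, lifting) GreatestI_nat less_imp_le_nat)
  have lp: "x ! t = y ! t" if "t < p" for t
    using that not_less_Least[of t P] p_def P_def Pp by auto
  have gs: "x ! t = y ! t" if "s < t" "t < n" for t
  proof (rule ccontr)
    assume "x ! t \<noteq> y ! t"
    hence "P t" using that P_def by auto
    hence "t \<le> s" unfolding s_def using P_def by (metis Greatest_le_nat less_imp_le_nat)
    thus False using that by simp
  qed
  have ps_le: "p \<le> s" unfolding p_def using Ps by (rule Least_le)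
  have pn: "p < n" "s < n" "x ! p \<noteq> y ! p" "x ! s \<noteq> y ! s" using Pp Ps P_def by auto
  have cls: "(dl x i = dl x p \<and> (\<forall>t. p \<le> t \<longrightarrow> t < s \<longrightarrow> x ! Suc t = y ! t)) \<or>
             (dl y j = dl y p \<and> (\<forall>t. p \<le> t \<longrightarrow> t < s \<longrightarrow> y ! Suc t = x ! t))"
    if "i < n" "j < n" "dl x i = dl y j" for i j
  proof (cases "i \<le> j")
    case True
    show ?thesis using typeR[OF lx ly True that(2) that(3) pn lp] by blast
  next
    case False
    hence "j \<le> i" by simp
    from typeR[OF ly lx this that(1) that(3)[symmetric]] pn lp
    show ?thesis by (metis)
  qed
  obtain i1 j1 where 1: "i1 < n" "j1 < n" "z1 = dl x i1" "z1 = dl y j1"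
    using z(1) lx ly unfolding del1_eq by auto
  obtain i2 j2 where 2: "i2 < n" "j2 < n" "z2 = dl x i2" "z2 = dl y j2"
    using z(2) lx ly unfolding del1_eq by auto
  define R where "R \<longleftrightarrow> (\<forall>t. p \<le> t \<longrightarrow> t < s \<longrightarrow> x ! Suc t = y ! t)"
  define L where "L \<longleftrightarrow> (\<forall>t. p \<le> t \<longrightarrow> t < s \<longrightarrow> y ! Suc t = x ! t)"
  have a1: "(z1 = dl x p \<and> R) \<or> (z1 = dl y p \<and> L)"
    using cls[OF 1(1,2)] 1 unfolding R_def L_def by metis
  have a2: "(z2 = dl x p \<and> R) \<or> (z2 = dl y p \<and> L)"
    using cls[OF 2(1,2)] 2 unfolding R_def L_def by metis
  have RL: "R \<and> L" and zz: "dl x p \<noteq> dl y p" using a1 a2 z(3) by auto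
  have "p \<noteq> s"
  proof
    assume "p = s"
    have "dl x p = dl y p"
    proof (rule dl_eqI[OF lx ly pn(1) pn(1)])
      fix t assume "t < n - 1"
      thus "(if t < p then x ! t else x ! Suc t) = (if t < p then y ! t else y ! Suc t)"
        using lp gs[of "Suc t"] \<open>p = s\<close> by auto
    qed
    thus False using zz by simp
  qed
  hence "p < s" using ps_le by simp
  thus ?thesis using pn lp gs RL unfolding R_def L_def by (intro exI[of _ p] exI[of _ s]) auto
qed

lemma alt_structure:
  assumes "\<forall>t. p \<le> t \<longrightarrow> t < s \<longrightarrow> x ! Suc t = y ! t \<and> y ! Suc t = x ! t"
  shows "p \<le> t \<Longrightarrow> t \<le> s \<Longrightarrow>
    x ! t = (if even (t - p) then x ! p else y ! p) \<and> y ! t = (if even (t - p) then y ! p else x ! p)"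
proof (induction t)
  case 0 thus ?case by simp
next
  case (Suc t)
  show ?case
  proof (cases "p \<le> t")
    case True
    hence IH: "x ! t = (if even (t - p) then x ! p else y ! p) \<and> y ! t = (if even (t - p) then y ! p else x ! p)"
      using Suc by simp
    have "x ! Suc t = y ! t \<and> y ! Suc t = x ! t" using assms True Suc.prems by auto
    moreover have "Suc t - p = Suc (t - p)" using True by simp
    ultimately show ?thesis using IH by auto
  next
    case False
    hence "Suc t = p" using Suc.prems by simp
    thus ?thesis by simp
  qed
qed

lemma swap_confusable:
  assumes lx: "length x = n" and ly: "length y = n" and ps: "p < s" "s < n" and xp: "x ! p \<noteq> y ! p"
    and out: "\<forall>t. t < n \<longrightarrow> (t < p \<or> s < t) \<longrightarrow> x ! t = y ! t"
    and inn: "\<forall>t. p \<le> t \<longrightarrow> t < s \<longrightarrow> x ! Suc t = y ! t \<and> y ! Suc t = x ! t"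
  shows "\<not> card (del1 x \<inter> del1 y) \<le> 1"
proof -
  have pn: "p < n" using ps by simp
  have e1: "dl x p = dl y s"
    by (rule dl_eqI[OF lx ly pn ps(2)]) (use out inn ps in auto)
  have e2: "dl x s = dl y p"
    by (rule dl_eqI[OF lx ly ps(2) pn]) (use out inn ps in auto)
  have ne: "dl x p \<noteq> dl x s"
  proof
    assume h: "dl x p = dl x s"
    have "p < n - 1" using ps by simp
    hence "dl x p ! p = dl x s ! p" using h by simp
    hence "x ! Suc p = x ! p" using dl_nth[of p x p] dl_nth[of s x p] ps lx by simp
    thus False using inn xp ps by auto
  qed
  have "dl x p \<in> del1 x \<inter> del1 y" "dl x s \<in> del1 x \<inter> del1 y"
    unfolding del1_eq using e1 e2 ps lx ly by (metis (mono_tags, lifting) IntI mem_Collect_eq order.strict_trans)+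
  moreover have "finite (del1 x \<inter> del1 y)" using finite_del1 by blast
  ultimately show ?thesis using ne card_le_Suc0_iff_eq by fastforce
qed

definition badw :: "nat \<Rightarrow> nat list \<Rightarrow> bool" where
  "badw W x \<longleftrightarrow> (\<exists>i. i + W \<le> length x \<and> (\<forall>t. i \<le> t \<longrightarrow> t + 2 < i + W \<longrightarrow> x ! (t + 2) = x ! t))"

definition fsum :: "nat list \<Rightarrow> nat" where
  "fsum x = (\<Sum>t\<in>{t. t < length x \<and> even t}. x ! t)"

lemma card_even_interval:
  fixes p s :: nat shows
  "card {t. p \<le> t \<and> t \<le> s \<and> even t} \<le> (s - p) div 2 + 1"
proof -
  have "{t. p \<le> t \<and> t \<le> s \<and> even t} \<subseteq> (\<lambda>j. 2 * j) ` {(p + 1) div 2 .. s div 2}"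
  proof
    fix t assume "t \<in> {t. p \<le> t \<and> t \<le> s \<and> even t}"
    then obtain j where "t = 2 * j" "p \<le> 2 * j" "2 * j \<le> s" by auto
    moreover have "j \<in> {(p + 1) div 2 .. s div 2}" using \<open>p \<le> 2 * j\<close> \<open>2 * j \<le> s\<close> by auto
    ultimately show "t \<in> (\<lambda>j. 2 * j) ` {(p + 1) div 2 .. s div 2}" by auto
  qed
  hence "card {t. p \<le> t \<and> t \<le> s \<and> even t} \<le> card ((\<lambda>j. 2 * j) ` {(p + 1) div 2 .. s div 2})"
    by (intro card_mono) auto
  also have "\<dots> \<le> card {(p + 1) div 2 .. s div 2}" by (rule card_image_le) simp
  also have "\<dots> \<le> (s - p) div 2 + 1" by simp
  finally show ?thesis .
qed

lemma card_even_interval_pos: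
  fixes p s :: nat assumes "p < s" shows "0 < card {t. p \<le> t \<and> t \<le> s \<and> even t}"
proof -
  have "finite {t. p \<le> t \<and> t \<le> s \<and> even t}" by (rule finite_subset[of _ "{..s}"]) auto
  moreover have "(if even p then p else Suc p) \<in> {t. p \<le> t \<and> t \<le> s \<and> even t}" using assms by auto
  ultimately show ?thesis by (metis card_gt_0_iff empty_iff)
qed

lemma coprime_m:
  fixes e k q :: nat
  assumes "1 \<le> e" "e \<le> q - 1"
  shows "coprime (k * fact (q - 1) + 1) e"
proof -
  have "e dvd k * fact (q - 1)" using dvd_fact[OF assms] by simp
  moreover have "coprime (k * fact (q - 1) + 1) (k * fact (q - 1))" by (rule coprime_add_one_left)
  ultimately show ?thesis using coprime_divisors[of "k * fact (q - 1) + 1" "k * fact (q - 1) + 1"] dvd_refl by blast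
qed

lemma code_ok:
  assumes q: "q \<ge> 2" and W: "2 \<le> W" and m: "m = k * fact (q - 1) + 1" and mW: "W div 2 < m"
  shows "recon_code q n {x \<in> words q n. \<not> badw W x \<and> fsum x mod m = c}"
  unfolding recon_code_def
proof (intro conjI ballI impI)
  show "{x \<in> words q n. \<not> badw W x \<and> fsum x mod m = c} \<subseteq> words q n" by auto
  fix x y assume xC: "x \<in> {x \<in> words q n. \<not> badw W x \<and> fsum x mod m = c}"
    and yC: "y \<in> {x \<in> words q n. \<not> badw W x \<and> fsum x mod m = c}" and xy: "x \<noteq> y"
  have lx: "length x = n" and ly: "length y = n" using xC yC unfolding words_def by auto
  have sx: "set x \<subseteq> {..<q}" and sy: "set y \<subseteq> {..<q}" using xC yC unfolding words_def by auto
  show "card (del1 x \<inter> del1 y) \<le> 1"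
  proof (rule ccontr)
    assume nc: "\<not> card (del1 x \<inter> del1 y) \<le> 1"
    obtain p s where ps: "p < s" "s < n" "x ! p \<noteq> y ! p"
      and out: "\<forall>t. t < n \<longrightarrow> (t < p \<or> s < t) \<longrightarrow> x ! t = y ! t"
      and inn: "\<forall>t. p \<le> t \<longrightarrow> t < s \<longrightarrow> x ! Suc t = y ! t \<and> y ! Suc t = x ! t"
      using confusable_structure[OF lx ly xy nc] by blast
    note alt = alt_structure[OF inn]
    define a where "a = x ! p"
    define b where "b = y ! p"
    have "x ! p \<in> set x" "y ! p \<in> set y" using ps lx ly by auto
    hence ab: "a \<noteq> b" "a < q" "b < q" using ps sx sy
      unfolding a_def b_def by auto
    have len: "s - p + 1 < W"
    proof (rule ccontr)
      assume "\<not> s - p + 1 < W"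
      hence "badw W x" unfolding badw_def
      proof (intro exI[of _ p] conjI allI impI)
        assume "\<not> s - p + 1 < W"
        thus "p + W \<le> length x" using lx ps by simp
        fix t assume "p \<le> t" "t + 2 < p + W"
        hence "t + 2 \<le> s" using \<open>\<not> s - p + 1 < W\<close> ps by linarith
        moreover have "t + 2 - p = (t - p) + 2" using \<open>p \<le> t\<close> by simp
        ultimately show "x ! (t + 2) = x ! t" using alt[of t] alt[of "t+2"] \<open>p \<le> t\<close>
          by auto
      qed
      thus False using xC by simp
    qed
    define N where "N = card {t. p \<le> t \<and> t \<le> s \<and> even t}"
    have N1: "0 < N" unfolding N_def by (rule card_even_interval_pos[OF ps(1)])
    have N2: "N < m"
    proof -
      have "N \<le> (s - p) div 2 + 1" unfolding N_def by (rule card_even_interval)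
      also have "\<dots> \<le> W div 2" using len W by linarith
      finally show ?thesis using mW by simp
    qed
    define d :: int where "d = (if even p then int a - int b else int b - int a)"
    define E where "E = {t. t < n \<and> even t}"
    have fE: "finite E" unfolding E_def by simp
    have pt: "int (x ! t) - int (y ! t) = (if p \<le> t \<and> t \<le> s then d else 0)" if "t \<in> E" for t
    proof (cases "p \<le> t \<and> t \<le> s")
      case True
      have ev: "even t" using that E_def by simp
      have "even (t - p) \<longleftrightarrow> even p" using True ev by (simp add: even_diff_nat)
      thus ?thesis using alt[of t] True unfolding d_def a_def b_def by auto
    next
      case False
      thus ?thesis using out that E_def by auto
    qed
    have "int (fsum x) - int (fsum y) = (\<Sum>t\<in>E. int (x ! t) - int (y ! t))"
      unfolding fsum_def E_def lx ly by (simp add: sum_subtractf)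
    also have "\<dots> = (\<Sum>t\<in>E. if p \<le> t \<and> t \<le> s then d else 0)"
      by (rule sum.cong) (auto simp: pt)
    also have "\<dots> = (\<Sum>t\<in>{t \<in> E. p \<le> t \<and> t \<le> s}. d)"
      by (rule sum.inter_filter[symmetric]) (rule fE)
    also have "{t \<in> E. p \<le> t \<and> t \<le> s} = {t. p \<le> t \<and> t \<le> s \<and> even t}"
      unfolding E_def using ps by auto
    finally have diff: "int (fsum x) - int (fsum y) = int N * d" unfolding N_def by simp
    have "fsum x mod m = fsum y mod m" using xC yC by simp
    hence "int (fsum x) mod int m = int (fsum y) mod int m" by (metis of_nat_mod)
    hence dv: "int m dvd int N * d" using diff mod_eq_dvd_iff by metis
    define e where "e = nat \<bar>d\<bar>"
    have e1: "1 \<le> e" "e \<le> q - 1" using ab unfolding e_def d_def by auto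
    have "int m dvd int N * int e"
      using dv unfolding e_def by (simp add: abs_if)
    hence "m dvd N * e" by (metis of_nat_dvd_iff of_nat_mult)
    moreover have "coprime m e" using coprime_m[OF e1, of k] m by simp
    ultimately have "m dvd N" using coprime_dvd_mult_left_iff by blast
    thus False using N1 N2 by (simp add: nat_dvd_not_less)
  qed
qed

definition pat :: "nat \<Rightarrow> nat \<Rightarrow> nat \<Rightarrow> nat \<Rightarrow> nat list" where
  "pat L m a b = map (\<lambda>t. if t < m then (if even t then a else b) else (if even t then b else a)) [0..<L]"

lemma pat_length[simp]: "length (pat L m a b) = L" unfolding pat_def by simp

lemma pat_nth: "t < L \<Longrightarrow> pat L m a b ! t = (if t < m then (if even t then a else b) else (if even t then b else a))"
  unfolding pat_def by simp

lemma pat_words: "a < q \<Longrightarrow> b < q \<Longrightarrow> pat L m a b \<in> words q L"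
  unfolding words_def pat_def by auto

lemma pat_inj:
  assumes L: "2 \<le> L" and ab: "a \<noteq> b" "a' \<noteq> b'" and m: "even m" "m < L" "even m'" "m' < L"
    and e: "pat L m a b = pat L m' a' b'"
  shows "a = a' \<and> b = b' \<and> m = m'"
proof -
  have n: "pat L m a b ! t = pat L m' a' b' ! t" for t using e by simp
  have n0: "pat L m a b ! 0 = pat L m' a' b' ! 0" and n1: "pat L m a b ! 1 = pat L m' a' b' ! 1"
    using n by auto
  show ?thesis
  proof (cases "m = 0")
    case True
    note m0 = True
    show ?thesis
    proof (cases "m' = 0")
      case True
      thus ?thesis using m0 n0 n1 L by (simp add: pat_nth)
    next
      case False
      hence m2: "2 \<le> m'" using m by presburger
      have "b = a'" "a = b'" using n0 n1 L m0 m2 by (auto simp: pat_nth)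
      moreover have "pat L m a b ! m' = pat L m' a' b' ! m'" by (rule n)
      ultimately show ?thesis using m m0 ab by (simp add: pat_nth)
    qed
  next
    case False
    hence m2: "2 \<le> m" using m by presburger
    show ?thesis
    proof (cases "m' = 0")
      case True
      have "a = b'" "b = a'" using n0 n1 L True m2 by (auto simp: pat_nth)
      moreover have "pat L m a b ! m = pat L m' a' b' ! m" by (rule n)
      ultimately show ?thesis using m True ab by (simp add: pat_nth)
    next
      case False
      hence m2': "2 \<le> m'" using m by presburger
      have aa: "a = a'" "b = b'" using n0 n1 L m2 m2' by (auto simp: pat_nth)
      have "m = m'"
      proof (rule ccontr)
        assume "m \<noteq> m'"
        hence "m < m' \<or> m' < m" by auto
        thus False
        proof
          assume "m < m'"
          have "pat L m a b ! m = pat L m' a' b' ! m" by (rule n)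
          thus False using \<open>m < m'\<close> m aa ab by (simp add: pat_nth)
        next
          assume "m' < m"
          have "pat L m a b ! m' = pat L m' a' b' ! m'" by (rule n)
          thus False using \<open>m' < m\<close> m aa ab by (simp add: pat_nth)
        qed
      qed
      thus ?thesis using aa by simp
    qed
  qed
qed

lemma pat_clique_lt:
  assumes ab: "a \<noteq> b" and m: "even m" "even m'" "m < m'" "m' \<le> L" and ly: "length y = k"
  shows "\<not> card (del1 (pat L m a b @ y) \<inter> del1 (pat L m' a b @ y)) \<le> 1"
proof -
  let ?X = "pat L m a b @ y" and ?Y = "pat L m' a b @ y"
  have nX: "?X ! t = (if t < L then (if t < m then (if even t then a else b) else (if even t then b else a)) else y ! (t - L))" for t
    by (simp add: nth_append pat_nth)
  have nY: "?Y ! t = (if t < L then (if t < m' then (if even t then a else b) else (if even t then b else a)) else y ! (t - L))" for t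
    by (simp add: nth_append pat_nth)
  have mm: "Suc m < m'" using m by presburger
  show ?thesis
  proof (rule swap_confusable[of ?X "L + k" ?Y m "m' - 1"])
    show "length ?X = L + k" "length ?Y = L + k" using ly by auto
    show "m < m' - 1" "m' - 1 < L + k" using mm m by auto
    show "?X ! m \<noteq> ?Y ! m" using nX nY m mm ab by auto
    show "\<forall>t. t < L + k \<longrightarrow> (t < m \<or> m' - 1 < t) \<longrightarrow> ?X ! t = ?Y ! t"
      using nX nY m mm by auto
    show "\<forall>t. m \<le> t \<longrightarrow> t < m' - 1 \<longrightarrow> ?X ! Suc t = ?Y ! t \<and> ?Y ! Suc t = ?X ! t"
      using nX nY m by auto
  qed
qed

lemma pat_clique:
  assumes ab: "a \<noteq> b" and m: "even m" "even m'" "m \<noteq> m'" "m < L" "m' < L" and ly: "length y = k"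
  shows "\<not> card (del1 (pat L m a b @ y) \<inter> del1 (pat L m' a b @ y)) \<le> 1"
proof (cases "m < m'")
  case True thus ?thesis using pat_clique_lt[OF ab m(1,2) True] m ly by simp
next
  case False
  hence "m' < m" using m by simp
  thus ?thesis using pat_clique_lt[OF ab m(2,1) _ _ ly, of L] m by (simp add: Int_commute)
qed

lemma dl_append: "i < length y \<Longrightarrow> dl (w @ y) (length w + i) = w @ dl y i"
  unfolding dl_def by simp

lemma prefix_confusable:
  assumes "\<not> card (del1 y \<inter> del1 y') \<le> 1" "length y = length y'"
  shows "\<not> card (del1 (w @ y) \<inter> del1 (w @ y')) \<le> 1"
proof -
  have sub: "(\<lambda>z. w @ z) ` (del1 y \<inter> del1 y') \<subseteq> del1 (w @ y) \<inter> del1 (w @ y')"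
  proof
    fix u assume "u \<in> (\<lambda>z. w @ z) ` (del1 y \<inter> del1 y')"
    then obtain z where z0: "u = w @ z" "z \<in> del1 y" "z \<in> del1 y'" by auto
    obtain i where zi: "z = dl y i" "i < length y" using z0(2) unfolding del1_eq by auto
    obtain j where zj: "z = dl y' j" "j < length y'" using z0(3) unfolding del1_eq by auto
    note z = z0(1) zi zj
    have "u = dl (w @ y) (length w + i)" "u = dl (w @ y') (length w + j)"
      using z dl_append by auto
    moreover have "length w + i < length (w @ y)" "length w + j < length (w @ y')" using z by auto
    ultimately show "u \<in> del1 (w @ y) \<inter> del1 (w @ y')" unfolding del1_eq by blast
  qed
  have "card (del1 y \<inter> del1 y') = card ((\<lambda>z. w @ z) ` (del1 y \<inter> del1 y'))"
    by (rule card_image[symmetric]) (simp add: inj_on_def)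
  also have "\<dots> \<le> card (del1 (w @ y) \<inter> del1 (w @ y'))"
    by (rule card_mono[OF _ sub]) (use finite_del1 in blast)
  finally show ?thesis using assms by simp
qed

lemma words_finite: "finite (words q n)"
proof -
  have "words q n = {xs. set xs \<subseteq> {..<q} \<and> length xs = n}" unfolding words_def by auto
  thus ?thesis using finite_lists_length_eq[of "{..<q}" n] by simp
qed

lemma words_card: "card (words q n) = q ^ n"
proof -
  have "words q n = {xs. set xs \<subseteq> {..<q} \<and> length xs = n}" unfolding words_def by auto
  thus ?thesis using card_lists_length_eq[of "{..<q}" n] by simp
qed

lemma words_append: "w \<in> words q L \<Longrightarrow> y \<in> words q k \<Longrightarrow> w @ y \<in> words q (L + k)"
  unfolding words_def by auto

lemma words_take: "x \<in> words q n \<Longrightarrow> L \<le> n \<Longrightarrow> take L x \<in> words q L"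
  unfolding words_def by (auto dest: in_set_takeD)

lemma words_drop: "x \<in> words q n \<Longrightarrow> drop L x \<in> words q (n - L)"
  unfolding words_def by (auto dest: in_set_dropD)

lemma words_append_iff: "w @ y \<in> words q n \<Longrightarrow> y \<in> words q (n - length w)"
  unfolding words_def by auto

definition Fam :: "nat \<Rightarrow> nat \<Rightarrow> nat \<Rightarrow> nat list set" where
  "Fam L a b = (\<lambda>m. pat L m a b) ` {m. even m \<and> m < L}"

definition Pairs :: "nat \<Rightarrow> (nat \<times> nat) set" where
  "Pairs q = Sigma {..<q} (\<lambda>a. {..<q} - {a})"

definition Tset :: "nat \<Rightarrow> nat \<Rightarrow> nat list set" where
  "Tset q L = (\<Union>(a, b)\<in>Pairs q. Fam L a b)"

lemma finite_evens: "finite {m::nat. even m \<and> m < L}" by (rule finite_subset[of _ "{..<L}"]) auto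

lemma Pairs_card: "card (Pairs q) = q * (q - 1)"
proof -
  have "card (Pairs q) = (\<Sum>a\<in>{..<q}. card ({..<q} - {a}))"
    unfolding Pairs_def by (rule card_SigmaI) auto
  also have "\<dots> = (\<Sum>a\<in>{..<q}. q - 1)" by (rule sum.cong) auto
  finally show ?thesis by simp
qed

lemma Pairs_finite: "finite (Pairs q)" unfolding Pairs_def by simp

lemma Fam_card:
  assumes "2 \<le> L" "a \<noteq> b" shows "card (Fam L a b) = card {m. even m \<and> m < L}"
  unfolding Fam_def
proof (rule card_image)
  show "inj_on (\<lambda>m. pat L m a b) {m. even m \<and> m < L}"
    using pat_inj[OF assms(1) assms(2) assms(2)] by (auto simp: inj_on_def)
qed

lemma Fam_disj:
  assumes "2 \<le> L" "a \<noteq> b" "a' \<noteq> b'" "(a, b) \<noteq> (a', b')"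
  shows "Fam L a b \<inter> Fam L a' b' = {}"
  using pat_inj[OF assms(1-3)] assms(4) unfolding Fam_def by fastforce

lemma Tset_words: "Tset q L \<subseteq> words q L"
  unfolding Tset_def Fam_def Pairs_def using pat_words by auto

lemma Tset_card:
  assumes "2 \<le> L" shows "card (Tset q L) = q * (q - 1) * card {m. even m \<and> m < L}"
proof -
  have "card (Tset q L) = (\<Sum>p\<in>Pairs q. card (case p of (a, b) \<Rightarrow> Fam L a b))"
    unfolding Tset_def
  proof (rule card_UN_disjoint)
    show "finite (Pairs q)" by (rule Pairs_finite)
    show "\<forall>i\<in>Pairs q. finite (case i of (a, b) \<Rightarrow> Fam L a b)"
      unfolding Fam_def using finite_evens by auto
    show "\<forall>i\<in>Pairs q. \<forall>j\<in>Pairs q. i \<noteq> j \<longrightarrow> (case i of (a, b) \<Rightarrow> Fam L a b) \<inter> (case j of (a, b) \<Rightarrow> Fam L a b) = {}"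
      using Fam_disj[OF assms] unfolding Pairs_def by auto
  qed
  also have "\<dots> = (\<Sum>p\<in>Pairs q. card {m. even m \<and> m < L})"
  proof (rule sum.cong)
    fix p assume "p \<in> Pairs q"
    then obtain a b where "p = (a, b)" "a \<noteq> b" unfolding Pairs_def by auto
    thus "card (case p of (a, b) \<Rightarrow> Fam L a b) = card {m. even m \<and> m < L}"
      using Fam_card[OF assms] by simp
  qed simp
  also have "\<dots> = q * (q - 1) * card {m. even m \<and> m < L}" using Pairs_card by simp
  finally show ?thesis .
qed

lemma code_card_le: assumes "recon_code q n C" shows "card C \<le> q ^ n"
proof -
  have "C \<subseteq> words q n" using assms unfolding recon_code_def by simp
  hence "card C \<le> card (words q n)" by (rule card_mono[OF words_finite])
  thus ?thesis by (simp add: words_card)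
qed

lemma fiber_code:
  assumes C: "recon_code q n C" and w: "length w = L"
  shows "recon_code q (n - L) {y. w @ y \<in> C}"
  unfolding recon_code_def
proof (intro conjI ballI impI)
  show "{y. w @ y \<in> C} \<subseteq> words q (n - L)"
    using C w words_append_iff unfolding recon_code_def by blast
  fix y y' assume y: "y \<in> {y. w @ y \<in> C}" and y': "y' \<in> {y. w @ y \<in> C}" and ne: "y \<noteq> y'"
  have Cw: "C \<subseteq> words q n" using C unfolding recon_code_def by simp
  have "length (w @ y) = n" "length (w @ y') = n" using y y' Cw unfolding words_def by auto
  hence ll: "length y = length y'" by simp
  have ne2: "w @ y \<noteq> w @ y'" using ne by simp
  have cc: "card (del1 (w @ y) \<inter> del1 (w @ y')) \<le> 1"
    using C y y' ne2 unfolding recon_code_def by simp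
  show "card (del1 y \<inter> del1 y') \<le> 1"
  proof (rule ccontr)
    assume "\<not> card (del1 y \<inter> del1 y') \<le> 1"
    from prefix_confusable[OF this ll, of w] cc show False by simp
  qed
qed

lemma fam_part_card:
  assumes C: "recon_code q n C" and L: "L \<le> n" and ab: "a \<noteq> b"
  shows "card (\<Union>w\<in>Fam L a b. {x \<in> C. take L x = w}) \<le> q ^ (n - L)"
proof -
  let ?U = "\<Union>w\<in>Fam L a b. {x \<in> C. take L x = w}"
  have Cw: "C \<subseteq> words q n" using C unfolding recon_code_def by simp
  have inj: "inj_on (drop L) ?U"
  proof (rule inj_onI)
    fix x x' assume x: "x \<in> ?U" and x': "x' \<in> ?U" and d: "drop L x = drop L x'"
    obtain m where m: "even m" "m < L" "take L x = pat L m a b" "x \<in> C" using x unfolding Fam_def by auto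
    obtain m' where m': "even m'" "m' < L" "take L x' = pat L m' a b" "x' \<in> C" using x' unfolding Fam_def by auto
    define y where "y = drop L x"
    have ex: "x = pat L m a b @ y" using m(3) unfolding y_def by (metis append_take_drop_id)
    have ex': "x' = pat L m' a b @ y" using m'(3) d unfolding y_def by (metis append_take_drop_id)
    show "x = x'"
    proof (rule ccontr)
      assume ne: "x \<noteq> x'"
      hence "m \<noteq> m'" using ex ex' by metis
      have "\<not> card (del1 (pat L m a b @ y) \<inter> del1 (pat L m' a b @ y)) \<le> 1"
        by (rule pat_clique[OF ab m(1) m'(1) \<open>m \<noteq> m'\<close> m(2) m'(2) refl])
      hence "\<not> card (del1 x \<inter> del1 x') \<le> 1" using ex ex' by simp
      thus False using C m(4) m'(4) ne unfolding recon_code_def by blast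
    qed
  qed
  have "drop L ` ?U \<subseteq> words q (n - L)" using Cw words_drop by blast
  hence "card (drop L ` ?U) \<le> card (words q (n - L))" by (rule card_mono[OF words_finite])
  hence "card (drop L ` ?U) \<le> q ^ (n - L)" by (simp add: words_card)
  thus ?thesis using card_image[OF inj] by simp
qed

lemma lower_rec:
  fixes q L :: nat
  assumes q2: "2 \<le> q" and L2: "2 \<le> L"
  shows "B * L \<le> n \<Longrightarrow> recon_code q n C \<Longrightarrow>
    real (card C) \<le> real q ^ n * (1 / real (card {m. even m \<and> m < L}) +
       (1 - real (q * (q - 1) * card {m. even m \<and> m < L}) / real q ^ L) ^ B)"
proof (induction B arbitrary: n C)
  case 0
  have "real (card C) \<le> real (q ^ n)" using code_card_le[OF 0(2)] by (simp only: of_nat_le_iff)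
  hence a: "real (card C) \<le> real q ^ n" by simp
  have "0 \<le> real q ^ n * (1 / real (card {m. even m \<and> m < L}))" by simp
  hence "real q ^ n \<le> real q ^ n * (1 / real (card {m. even m \<and> m < L}) + 1)"
    by (simp add: distrib_left)
  thus ?case using a by (simp only: power_0 mult_1_right)
next
  case (Suc B)
  define h where "h = card {m. even m \<and> m < L}"
  define \<rho> where "\<rho> = real (q * (q - 1) * h) / real q ^ L"
  define \<Phi> where "\<Phi> = 1 / real h + (1 - \<rho>) ^ B"
  define n' where "n' = n - L"
  have nn: "n = L + n'" "B * L \<le> n'" using Suc.prems(1) unfolding n'_def by auto
  have C: "recon_code q n C" by fact
  have Cw: "C \<subseteq> words q n" using C unfolding recon_code_def by simp
  have finC: "finite C" using Cw words_finite finite_subset by blast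
  define CW where "CW w = {x \<in> C. take L x = w}" for w
  have Cun: "C = (\<Union>w\<in>words q L. CW w)"
    unfolding CW_def using Cw words_take nn by auto
  have "card C = (\<Sum>w\<in>words q L. card (CW w))"
    unfolding Cun
    by (rule card_UN_disjoint) (use words_finite finC CW_def in auto)
  also have "\<dots> = (\<Sum>w\<in>words q L - Tset q L. card (CW w)) + (\<Sum>w\<in>Tset q L. card (CW w))"
    by (rule sum.subset_diff[OF Tset_words words_finite])
  finally have split: "card C = (\<Sum>w\<in>words q L - Tset q L. card (CW w)) + (\<Sum>w\<in>Tset q L. card (CW w))" .
  have IH: "real (card (CW w)) \<le> real q ^ n' * \<Phi>" if w: "w \<in> words q L" for w
  proof -
    have lw: "length w = L" using w unfolding words_def by simp
    have "CW w = (\<lambda>y. w @ y) ` {y. w @ y \<in> C}"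
    proof (intro set_eqI iffI)
      fix x assume "x \<in> CW w"
      hence x: "x \<in> C" "take L x = w" unfolding CW_def by auto
      hence "x = w @ drop L x" by (metis append_take_drop_id)
      thus "x \<in> (\<lambda>y. w @ y) ` {y. w @ y \<in> C}" using x(1) by (intro image_eqI[of _ _ "drop L x"]) auto
    next
      fix x assume "x \<in> (\<lambda>y. w @ y) ` {y. w @ y \<in> C}"
      then obtain y where "x = w @ y" "w @ y \<in> C" by auto
      thus "x \<in> CW w" unfolding CW_def using lw by simp
    qed
    hence "card (CW w) = card {y. w @ y \<in> C}" by (simp add: card_image inj_on_def)
    moreover have "real (card {y. w @ y \<in> C}) \<le> real q ^ n' * \<Phi>"
      using Suc.IH[OF nn(2) fiber_code[OF C lw, folded n'_def]] unfolding \<Phi>_def \<rho>_def h_def n'_def by simp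
    ultimately show ?thesis by simp
  qed
  have A: "real (\<Sum>w\<in>words q L - Tset q L. card (CW w)) \<le> real (card (words q L - Tset q L)) * (real q ^ n' * \<Phi>)"
  proof -
    have "real (\<Sum>w\<in>words q L - Tset q L. card (CW w)) = (\<Sum>w\<in>words q L - Tset q L. real (card (CW w)))"
      by simp
    also have "\<dots> \<le> (\<Sum>w\<in>words q L - Tset q L. real q ^ n' * \<Phi>)"
      by (rule sum_mono) (use IH in auto)
    finally show ?thesis by simp
  qed
  have cardD: "card (words q L - Tset q L) = q ^ L - q * (q - 1) * h"
    using card_Diff_subset[OF finite_subset[OF Tset_words words_finite] Tset_words]
      words_card Tset_card[OF L2] unfolding h_def by simp
  have Tle: "q * (q - 1) * h \<le> q ^ L"
    using card_mono[OF words_finite Tset_words, of q L] words_card Tset_card[OF L2] unfolding h_def by simp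
  have Bnd: "(\<Sum>w\<in>Tset q L. card (CW w)) \<le> q * (q - 1) * q ^ n'"
  proof -
    have "(\<Sum>w\<in>Tset q L. card (CW w)) = (\<Sum>p\<in>Pairs q. \<Sum>w\<in>(case p of (a, b) \<Rightarrow> Fam L a b). card (CW w))"
      unfolding Tset_def
    proof (rule sum.UNION_disjoint)
      show "finite (Pairs q)" by (rule Pairs_finite)
      show "\<forall>i\<in>Pairs q. finite (case i of (a, b) \<Rightarrow> Fam L a b)"
        unfolding Fam_def using finite_evens by auto
      show "\<forall>i\<in>Pairs q. \<forall>j\<in>Pairs q. i \<noteq> j \<longrightarrow> (case i of (a, b) \<Rightarrow> Fam L a b) \<inter> (case j of (a, b) \<Rightarrow> Fam L a b) = {}"
        using Fam_disj[OF L2] unfolding Pairs_def by auto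
    qed
    also have "\<dots> \<le> (\<Sum>p\<in>Pairs q. q ^ n')"
    proof (rule sum_mono)
      fix p assume "p \<in> Pairs q"
      then obtain a b where p: "p = (a, b)" "a \<noteq> b" unfolding Pairs_def by auto
      have "(\<Sum>w\<in>Fam L a b. card (CW w)) = card (\<Union>w\<in>Fam L a b. CW w)"
        by (rule card_UN_disjoint[symmetric]) (use finC CW_def Fam_def finite_evens in auto)
      also have "\<dots> \<le> q ^ n'" using fam_part_card[OF C _ p(2)] nn unfolding CW_def n'_def by simp
      finally show "(\<Sum>w\<in>(case p of (a, b) \<Rightarrow> Fam L a b). card (CW w)) \<le> q ^ n'" using p by simp
    qed
    also have "\<dots> = q * (q - 1) * q ^ n'" using Pairs_card by simp
    finally show ?thesis .
  qed
  have "0 \<in> {m::nat. even m \<and> m < L}" using L2 by simp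
  hence hpos: "0 < h" unfolding h_def using finite_evens[of L] card_gt_0_iff by blast
  have qpos: "0 < real q" using q2 by simp
  have "real (card C) \<le> real (card (words q L - Tset q L)) * (real q ^ n' * \<Phi>) + real (q * (q - 1) * q ^ n')"
  proof -
    have "real (card C) = real (\<Sum>w\<in>words q L - Tset q L. card (CW w)) + real (\<Sum>w\<in>Tset q L. card (CW w))"
      using split by simp
    moreover have "real (\<Sum>w\<in>Tset q L. card (CW w)) \<le> real (q * (q - 1) * q ^ n')"
      using Bnd of_nat_le_iff by blast
    ultimately show ?thesis using A by linarith
  qed
  also have "\<dots> = (real q ^ L - real (q * (q - 1) * h)) * (real q ^ n' * \<Phi>) + real (q * (q - 1)) * real q ^ n'"
    using cardD Tle by (simp add: of_nat_diff)
  also have "\<dots> = real q ^ n * (1 / real h + (1 - \<rho>) ^ Suc B)"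
  proof -
    define Q where "Q = real q ^ L"
    define Qn where "Qn = real q ^ n'"
    define K where "K = real (q * (q - 1))"
    define H where "H = real h"
    have Qp: "Q > 0" unfolding Q_def using qpos by simp
    have Hp: "H > 0" unfolding H_def using hpos by simp
    have r: "\<rho> = K * H / Q" unfolding \<rho>_def K_def H_def Q_def by simp
    have r2: "Q * (1 - \<rho>) = Q - K * H" unfolding r using Qp by (simp add: field_simps)
    have qn: "real q ^ n = Q * Qn" unfolding Q_def Qn_def nn(1) by (simp add: power_add)
    have "(real q ^ L - real (q * (q - 1) * h)) * (real q ^ n' * \<Phi>) + real (q * (q - 1)) * real q ^ n'
        = (Q - K * H) * (Qn * (1 / H + (1 - \<rho>) ^ B)) + K * Qn"
      unfolding Q_def K_def H_def Qn_def \<Phi>_def by simp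
    also have "\<dots> = Qn * (Q / H - K) + Qn * ((Q - K * H) * (1 - \<rho>) ^ B) + K * Qn"
      using Hp by (simp add: field_simps)
    also have "\<dots> = Qn * (Q / H) + Qn * (Q * (1 - \<rho>) * (1 - \<rho>) ^ B)"
      unfolding r2 by (simp add: algebra_simps)
    also have "\<dots> = (Q * Qn) * (1 / H + (1 - \<rho>) ^ Suc B)"
      by (simp add: algebra_simps)
    finally show ?thesis unfolding qn H_def .
  qed
  finally show ?case unfolding h_def \<rho>_def by simp
qed

lemma window_card:
  assumes W: "2 \<le> W" and iW: "i + W \<le> n"
  shows "card {x \<in> words q n. \<forall>t. i \<le> t \<longrightarrow> t + 2 < i + W \<longrightarrow> x ! (t + 2) = x ! t} \<le> q ^ (n + 2 - W)"
proof -
  let ?S = "{x \<in> words q n. \<forall>t. i \<le> t \<longrightarrow> t + 2 < i + W \<longrightarrow> x ! (t + 2) = x ! t}"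
  define g where "g x = take (i + 2) x @ drop (i + W) x" for x :: "nat list"
  have gw: "g x \<in> words q (n + 2 - W)" if "x \<in> ?S" for x
  proof -
    have "x \<in> words q n" using that by simp
    thus ?thesis unfolding g_def words_def using W iW by (auto dest: in_set_takeD in_set_dropD)
  qed
  have inj: "inj_on g ?S"
  proof (rule inj_onI)
    fix x y assume x: "x \<in> ?S" and y: "y \<in> ?S" and e: "g x = g y"
    have lx: "length x = n" and ly: "length y = n" using x y unfolding words_def by auto
    have a: "x ! t = y ! t" if "t < i + 2" "t < n" for t
    proof -
      have "g x ! t = g y ! t" using e by simp
      moreover have "t < length (take (i + 2) x)" "t < length (take (i + 2) y)" using that lx ly iW W by auto
      ultimately show ?thesis unfolding g_def using that by (simp add: nth_append)
    qed
    have gd: "g z ! ((i + 2) + j) = drop (i + W) z ! j" if "length z = n" for z j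
    proof -
      have "length (take (i + 2) z) = i + 2" using that iW W by auto
      thus ?thesis unfolding g_def by (metis nth_append_length_plus)
    qed
    have b: "x ! t = y ! t" if "i + W \<le> t" "t < n" for t
    proof -
      define j where "j = t - (i + W)"
      have "g x ! ((i + 2) + j) = g y ! ((i + 2) + j)" using e by simp
      hence "drop (i + W) x ! j = drop (i + W) y ! j" using gd lx ly by simp
      moreover have "drop (i + W) x ! j = x ! t" "drop (i + W) y ! j = y ! t"
        using that lx ly unfolding j_def by auto
      ultimately show ?thesis by simp
    qed
    have c: "x ! t = y ! t" if "t < n" for t
      using that
    proof (induction t rule: less_induct)
      case (less t)
      show ?case
      proof (cases "t < i + 2")
        case True thus ?thesis using a less by simp
      next
        case False
        show ?thesis
        proof (cases "i + W \<le> t")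
          case True thus ?thesis using b less by simp
        next
          case False2: False
          define u where "u = t - 2"
          have u: "t = u + 2" "i \<le> u" "u + 2 < i + W" using False False2 unfolding u_def by auto
          have "x ! t = x ! u" using x u by auto
          also have "\<dots> = y ! u" using less u by simp
          also have "\<dots> = y ! t" using y u by auto
          finally show ?thesis .
        qed
      qed
    qed
    show "x = y" using c lx ly by (intro nth_equalityI) auto
  qed
  have "card ?S = card (g ` ?S)" by (rule card_image[symmetric, OF inj])
  also have "\<dots> \<le> card (words q (n + 2 - W))" by (rule card_mono[OF words_finite]) (use gw in auto)
  finally show ?thesis by (simp add: words_card)
qed

lemma bad_card:
  assumes W: "2 \<le> W" and Wn: "W \<le> n"
  shows "card {x \<in> words q n. badw W x} \<le> (n + 1) * q ^ (n + 2 - W)"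
proof -
  let ?S = "\<lambda>i. {x \<in> words q n. \<forall>t. i \<le> t \<longrightarrow> t + 2 < i + W \<longrightarrow> x ! (t + 2) = x ! t}"
  have sub: "{x \<in> words q n. badw W x} \<subseteq> (\<Union>i\<in>{..n - W}. ?S i)"
  proof
    fix x assume "x \<in> {x \<in> words q n. badw W x}"
    then obtain i where "x \<in> words q n" "i + W \<le> length x" "\<forall>t. i \<le> t \<longrightarrow> t + 2 < i + W \<longrightarrow> x ! (t + 2) = x ! t"
      unfolding badw_def by auto
    moreover have "length x = n" using calculation(1) unfolding words_def by simp
    ultimately show "x \<in> (\<Union>i\<in>{..n - W}. ?S i)" by auto
  qed
  have "card {x \<in> words q n. badw W x} \<le> card (\<Union>i\<in>{..n - W}. ?S i)"
    by (rule card_mono[OF _ sub]) (use words_finite in auto)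
  also have "\<dots> \<le> (\<Sum>i\<in>{..n - W}. card (?S i))" by (rule card_UN_le) simp
  also have "\<dots> \<le> (\<Sum>i\<in>{..n - W}. q ^ (n + 2 - W))"
    by (rule sum_mono) (use window_card[OF W] Wn in auto)
  also have "\<dots> = (n - W + 1) * q ^ (n + 2 - W)" by simp
  also have "\<dots> \<le> (n + 1) * q ^ (n + 2 - W)" by simp
  finally show ?thesis .
qed

lemma pigeon:
  assumes "finite A" "0 < m"
  shows "\<exists>c<m. card A \<le> m * card {x \<in> A. g x mod m = c}"
proof -
  define F where "F c = card {x \<in> A. g x mod m = c}" for c
  have "A = (\<Union>c\<in>{..<m}. {x \<in> A. g x mod m = c})" using assms(2) by auto
  hence "card A \<le> (\<Sum>c\<in>{..<m}. F c)" unfolding F_def by (metis card_UN_le finite_lessThan)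
  show ?thesis
  proof (rule ccontr)
    assume "\<not> ?thesis"
    hence lt: "\<And>c. c \<in> {..<m} \<Longrightarrow> m * F c < card A" unfolding F_def by auto
    have "(\<Sum>c\<in>{..<m}. m * F c) < (\<Sum>c\<in>{..<m}. card A)"
      by (rule sum_strict_mono) (use lt assms(2) in auto)
    hence "m * (\<Sum>c\<in>{..<m}. F c) < m * card A" by (simp add: sum_distrib_left)
    hence "(\<Sum>c\<in>{..<m}. F c) < card A" by simp
    thus False using \<open>card A \<le> _\<close> by simp
  qed
qed

lemma red_nonneg:
  assumes q: "2 \<le> q" and C: "recon_code q n C" and ne: "C \<noteq> {}"
  shows "0 \<le> redundancy q n C"
proof -
  have "finite C" using C words_finite finite_subset unfolding recon_code_def by blast
  hence cpos: "0 < card C" using ne card_gt_0_iff by blast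
  have "real (card C) \<le> real (q ^ n)" using code_card_le[OF C] by (simp only: of_nat_le_iff)
  hence "log q (real (card C)) \<le> log q (real q ^ n)" using q cpos by (intro log_mono) auto
  also have "\<dots> = real n" using q by (simp add: log_pow_cancel)
  finally show ?thesis unfolding redundancy_def by simp
qed

lemma bdd: "2 \<le> q \<Longrightarrow> bdd_below {redundancy q n C | C. recon_code q n C \<and> C \<noteq> {}}"
  by (rule bdd_belowI[of _ 0]) (use red_nonneg in blast)

lemma single_code: "1 \<le> q \<Longrightarrow> recon_code q n {replicate n 0}"
  unfolding recon_code_def words_def by auto

lemma nonempty_S: "1 \<le> q \<Longrightarrow> {redundancy q n C | C. recon_code q n C \<and> C \<noteq> {}} \<noteq> {}"
  using single_code by blast

lemma upper_main:
  assumes q2: "2 \<le> q" and W2: "2 \<le> W" and Wn: "W \<le> n"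
    and d: "real (n + 1) / real q ^ (W - 2) < 1"
  shows "min_redundancy q n \<le>
    log q (real ((W div 2 div fact (q - 1) + 1) * fact (q - 1) + 1)) - log q (1 - real (n + 1) / real q ^ (W - 2))"
proof -
  define F :: nat where "F = fact (q - 1)"
  define k where "k = W div 2 div F + 1"
  define m where "m = k * F + 1"
  define \<delta> where "\<delta> = real (n + 1) / real q ^ (W - 2)"
  have Fpos: "0 < F" unfolding F_def by simp
  have mW: "W div 2 < m"
  proof -
    define a where "a = W div 2"
    have "a mod F < F" using Fpos by simp
    moreover have "a = a div F * F + a mod F" by simp
    moreover have "m = a div F * F + F + 1" unfolding m_def k_def a_def by (simp add: algebra_simps)
    ultimately show ?thesis unfolding a_def by linarith
  qed
  have mpos: "0 < m" unfolding m_def by simp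
  define good where "good = {x \<in> words q n. \<not> badw W x}"
  have fg: "finite good" unfolding good_def using words_finite by simp
  have "good = words q n - {x \<in> words q n. badw W x}" unfolding good_def by auto
  hence "card good = q ^ n - card {x \<in> words q n. badw W x}"
    by (simp add: card_Diff_subset words_finite words_card)
  moreover have bc: "card {x \<in> words q n. badw W x} \<le> (n + 1) * q ^ (n + 2 - W)"
    by (rule bad_card[OF W2 Wn])
  moreover have "card {x \<in> words q n. badw W x} \<le> q ^ n"
    using card_mono[OF words_finite, of "{x \<in> words q n. badw W x}" q n] words_card by auto
  ultimately have e1: "real (card good) = real q ^ n - real (card {x \<in> words q n. badw W x})"
    by (simp add: of_nat_diff)
  moreover have "real (card {x \<in> words q n. badw W x}) \<le> real ((n + 1) * q ^ (n + 2 - W))"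
    using bc by (simp only: of_nat_le_iff)
  hence e2: "real (card {x \<in> words q n. badw W x}) \<le> real (n + 1) * real q ^ (n + 2 - W)"
    by (simp only: of_nat_mult of_nat_power)
  moreover have e3: "real q ^ (n + 2 - W) = real q ^ n / real q ^ (W - 2)"
    using q2 W2 Wn by (simp add: power_diff[symmetric])
  ultimately have e4: "real (card {x \<in> words q n. badw W x}) \<le> real (n + 1) * (real q ^ n / real q ^ (W - 2))"
    by simp
  have "real q ^ n * (1 - \<delta>) = real q ^ n - real (n + 1) * (real q ^ n / real q ^ (W - 2))"
    unfolding \<delta>_def by (simp add: algebra_simps)
  hence gl: "real (card good) \<ge> real q ^ n * (1 - \<delta>)" using e1 e4 by linarith
  have qn: "0 < real q ^ n" using q2 by simp
  have dpos: "0 < 1 - \<delta>" using d unfolding \<delta>_def by simp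
  obtain c where c: "c < m" "card good \<le> m * card {x \<in> good. fsum x mod m = c}"
    using pigeon[OF fg mpos, of fsum] by blast
  define Cc where "Cc = {x \<in> words q n. \<not> badw W x \<and> fsum x mod m = c}"
  have CcE: "{x \<in> good. fsum x mod m = c} = Cc" unfolding good_def Cc_def by auto
  have code: "recon_code q n Cc" unfolding Cc_def by (rule code_ok[OF q2 W2 m_def[unfolded F_def] mW])
  have "card good \<le> m * card Cc" using c(2) unfolding CcE .
  hence "real (card good) \<le> real (m * card Cc)" by (simp only: of_nat_le_iff)
  hence "real (card good) \<le> real m * real (card Cc)" by simp
  hence "real q ^ n * (1 - \<delta>) \<le> real m * real (card Cc)" using gl by linarith
  hence cl: "real q ^ n * (1 - \<delta>) / real m \<le> real (card Cc)" using mpos by (simp add: field_simps)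
  have lpos: "0 < real q ^ n * (1 - \<delta>) / real m" using qn dpos mpos by simp
  hence ccpos: "0 < real (card Cc)" using cl by linarith
  hence "Cc \<noteq> {}" by auto
  hence mem: "redundancy q n Cc \<in> {redundancy q n C | C. recon_code q n C \<and> C \<noteq> {}}" using code by blast
  have "log q (real q ^ n * (1 - \<delta>) / real m) \<le> log q (real (card Cc))"
    using q2 lpos cl by (intro log_mono) auto
  moreover have "log q (real q ^ n * (1 - \<delta>) / real m) = real n + log q (1 - \<delta>) - log q (real m)"
    using q2 qn dpos mpos by (simp add: log_divide_pos log_mult_pos log_pow_cancel)
  ultimately have "redundancy q n Cc \<le> log q (real m) - log q (1 - \<delta>)"
    unfolding redundancy_def by simp
  hence "min_redundancy q n \<le> log q (real m) - log q (1 - \<delta>)"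
    unfolding min_redundancy_def using cInf_lower2[OF mem _ bdd[OF q2]] by blast
  thus ?thesis unfolding m_def k_def F_def \<delta>_def .
qed

lemma lower_main:
  assumes q2: "2 \<le> q" and L2: "2 \<le> L" and BL: "B * L \<le> n"
  shows "- log q (1 / real (card {m. even m \<and> m < L}) +
       (1 - real (q * (q - 1) * card {m. even m \<and> m < L}) / real q ^ L) ^ B) \<le> min_redundancy q n"
  unfolding min_redundancy_def
proof (rule cInf_greatest)
  show "{redundancy q n C | C. recon_code q n C \<and> C \<noteq> {}} \<noteq> {}" using nonempty_S q2 by simp
  fix r assume "r \<in> {redundancy q n C | C. recon_code q n C \<and> C \<noteq> {}}"
  then obtain C where C: "recon_code q n C" "C \<noteq> {}" "r = redundancy q n C" by auto
  define \<Phi> where "\<Phi> = 1 / real (card {m. even m \<and> m < L}) +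
       (1 - real (q * (q - 1) * card {m. even m \<and> m < L}) / real q ^ L) ^ B"
  have "finite C" using C words_finite finite_subset unfolding recon_code_def by blast
  hence cpos: "0 < card C" using C(2) card_gt_0_iff by blast
  have b: "real (card C) \<le> real q ^ n * \<Phi>" unfolding \<Phi>_def by (rule lower_rec[OF q2 L2 BL C(1)])
  have qn: "0 < real q ^ n" using q2 by simp
  have Phipos: "0 < \<Phi>"
  proof -
    have "0 < real (card C)" using cpos by simp
    hence "0 < real q ^ n * \<Phi>" using b by linarith
    thus ?thesis using qn by (simp add: zero_less_mult_iff)
  qed
  have "log q (real (card C)) \<le> log q (real q ^ n * \<Phi>)"
    using q2 cpos b by (intro log_mono) auto
  also have "\<dots> = real n + log q \<Phi>" using q2 qn Phipos by (simp add: log_mult_pos log_pow_cancel)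
  finally show "- log q \<Phi> \<le> r" unfolding C(3) redundancy_def by simp
qed

lemma asym_up1:
  fixes q F :: real assumes "q > 1" "F \<ge> 0"
  shows "((\<lambda>u. ((u + sqrt u + 1)/2 + F + 1) / (1 - 2 * q^2 / q powr sqrt u) / (u / 2)) \<longlongrightarrow> 1) at_top"
  using assms by real_asymp

lemma asym_up2:
  fixes q :: real assumes "q > 1"
  shows "eventually (\<lambda>u. 2 * q^2 / q powr sqrt u < 1/2) at_top"
  using assms by real_asymp

lemma asym_lo1:
  "((\<lambda>u::real. (2 / (u - sqrt u - 1) + exp (- (2 powr sqrt u) / 2)) / (2 / u)) \<longlongrightarrow> 1) at_top"
  by real_asymp

lemma asym_ell:
  fixes q :: real assumes "q > 1"
  shows "filterlim (\<lambda>n::nat. log q (real n)) at_top at_top"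
  using assms by real_asymp

lemma asym_n1:
  fixes q :: real assumes "q > 1"
  shows "eventually (\<lambda>n::nat. log q (real n) + sqrt (log q (real n)) + 1 \<le> real n / 2) at_top"
  using assms by real_asymp

lemma evens_card_ge: "L \<le> 2 * card {m::nat. even m \<and> m < L}"
proof -
  have "(\<lambda>j. 2 * j) ` {..< (L + 1) div 2} \<subseteq> {m::nat. even m \<and> m < L}" by auto
  hence "card ((\<lambda>j. 2 * j) ` {..< (L + 1) div 2}) \<le> card {m::nat. even m \<and> m < L}"
    by (rule card_mono[OF finite_evens])
  moreover have "card ((\<lambda>j::nat. 2 * j) ` {..< (L + 1) div 2}) = (L + 1) div 2"
    by (subst card_image) (auto simp: inj_on_def)
  ultimately show ?thesis by linarith
qed

lemma Tle_export:
  assumes "2 \<le> L" shows "q * (q - 1) * card {m. even m \<and> m < L} \<le> q ^ L"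
  using card_mono[OF words_finite Tset_words, of q L] words_card Tset_card[OF assms] by simp

lemma upper_asym:
  assumes q2: "2 \<le> q" and e: "\<epsilon> > 0"
  shows "eventually (\<lambda>n. min_redundancy q n \<le> log q (log q (real n)) - log q 2 + \<epsilon>) sequentially"
proof -
  define F where "F = real (fact (q - 1) :: nat)"
  define A where "A u = (u + sqrt u + 1)/2 + F + 1" for u :: real
  define ee where "ee u = 2 * real q ^ 2 / real q powr sqrt u" for u :: real
  have q1: "real q > 1" using q2 by simp
  have qe: "1 < real q powr \<epsilon>" using q1 e by simp
  have "eventually (\<lambda>u. A u / (1 - ee u) / (u / 2) < real q powr \<epsilon>) at_top"
    using order_tendstoD(2)[OF asym_up1[OF q1, of F] qe] unfolding A_def ee_def F_def by simp
  moreover have "eventually (\<lambda>u. ee u < 1/2) at_top" unfolding ee_def using asym_up2[OF q1] by simp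
  moreover have "eventually (\<lambda>u::real. u \<ge> 4) at_top" by (rule eventually_ge_at_top)
  ultimately have "eventually (\<lambda>u. A u / (1 - ee u) / (u / 2) < real q powr \<epsilon> \<and> ee u < 1/2 \<and> u \<ge> 4) at_top"
    by eventually_elim auto
  hence ev1: "eventually (\<lambda>n. A (log q (real n)) / (1 - ee (log q (real n))) / (log q (real n) / 2) < real q powr \<epsilon> \<and>
      ee (log q (real n)) < 1/2 \<and> log q (real n) \<ge> 4) sequentially"
    using asym_ell[OF q1] unfolding filterlim_iff by blast
  have ev2: "eventually (\<lambda>n::nat. log q (real n) + sqrt (log q (real n)) + 1 \<le> real n / 2) sequentially"
    using asym_n1[OF q1] by simp
  have ev3: "eventually (\<lambda>n::nat. n \<ge> 1) sequentially" by (rule eventually_ge_at_top)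
  show ?thesis
    using ev1 ev2 ev3
  proof eventually_elim
    case (elim n)
    define u where "u = log q (real n)"
    have u4: "u \<ge> 4" and eu: "ee u < 1/2" and rat: "A u / (1 - ee u) / (u / 2) < real q powr \<epsilon>"
      and un: "u + sqrt u + 1 \<le> real n / 2" and n1: "n \<ge> 1"
      using elim unfolding u_def by auto
    have npos: "0 < real n" using n1 by simp
    have su: "0 \<le> sqrt u" using u4 by simp
    define W where "W = nat \<lceil>u + sqrt u\<rceil>"
    have W1: "u + sqrt u \<le> real W" unfolding W_def using su u4 by linarith
    have W2': "real W \<le> u + sqrt u + 1" unfolding W_def using su u4 by linarith
    have W2: "2 \<le> W" using W1 u4 su by linarith
    have Wn: "W \<le> n" using W2' un npos by linarith
    define \<delta> where "\<delta> = real (n + 1) / real q ^ (W - 2)"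
    have qW: "real q ^ W = real q powr real W" using q1 by (simp add: powr_realpow)
    have "real q powr (u + sqrt u) \<le> real q powr real W" using W1 q1 by (intro powr_mono) auto
    moreover have "real q powr (u + sqrt u) = real n * real q powr sqrt u"
      unfolding u_def using npos q1 by (simp add: powr_add)
    ultimately have qW2: "real n * real q powr sqrt u \<le> real q ^ W" using qW by simp
    have qpos: "0 < real q powr sqrt u" using q1 by simp
    have "W - 2 + 2 = W" using W2 by simp
    hence "real q ^ W = real q ^ (W - 2) * real q ^ 2" by (metis power_add)
    hence dq: "\<delta> = real (n + 1) * real q ^ 2 / real q ^ W" unfolding \<delta>_def using q1 by (simp add: field_simps)
    have "\<delta> \<le> real (n + 1) * real q ^ 2 / (real n * real q powr sqrt u)"
      unfolding dq using qW2 npos qpos q1 by (intro divide_left_mono) (auto intro: mult_pos_pos)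
    also have "\<dots> \<le> 2 * real n * real q ^ 2 / (real n * real q powr sqrt u)"
      using n1 npos qpos q1 by (intro divide_right_mono) auto
    also have "\<dots> = ee u" unfolding ee_def using npos by simp
    finally have de: "\<delta> \<le> ee u" .
    have d1: "\<delta> < 1" using de eu by simp
    define m where "m = (W div 2 div fact (q - 1) + 1) * fact (q - 1) + (1::nat)"
    have "(W div 2 div fact (q - 1)) * fact (q - 1) \<le> W div 2" by (metis div_mult_mod_eq le_add1)
    hence "m \<le> W div 2 + fact (q - 1) + 1" unfolding m_def by (simp add: algebra_simps)
    hence "real m \<le> real (W div 2 + fact (q - 1) + 1)" by (simp only: of_nat_le_iff)
    hence "real m \<le> real (W div 2) + F + 1" unfolding F_def by (simp only: of_nat_add of_nat_1)
    moreover have "real (W div 2) \<le> real W / 2" by linarith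
    moreover have "real W / 2 \<le> (u + sqrt u + 1) / 2" using W2' by (simp add: divide_right_mono)
    ultimately have mA: "real m \<le> A u" unfolding A_def by linarith
    have "0 < m" unfolding m_def by simp
    hence mpos: "0 < real m" by (simp only: of_nat_0_less_iff)
    have "min_redundancy q n \<le> log q (real m) - log q (1 - \<delta>)"
      using upper_main[OF q2 W2 Wn] d1 unfolding \<delta>_def m_def by simp
    also have "\<dots> \<le> log q (A u) - log q (1 - ee u)"
    proof -
      have "log q (real m) \<le> log q (A u)" using mA mpos q1 by (intro log_mono) auto
      moreover have "log q (1 - ee u) \<le> log q (1 - \<delta>)" using de eu q1 by (intro log_mono) auto
      ultimately show ?thesis by simp
    qed
    also have "\<dots> = log q (A u / (1 - ee u))"
      using mA mpos eu by (simp add: log_divide_pos)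
    also have "\<dots> \<le> log q (real q powr \<epsilon> * (u / 2))"
    proof -
      have "0 < u / 2" using u4 by simp
      hence "A u / (1 - ee u) < real q powr \<epsilon> * (u / 2)" using rat pos_divide_less_eq by blast
      thus ?thesis using mA mpos eu q1 by (intro log_mono) auto
    qed
    also have "\<dots> = \<epsilon> + log q u - log q 2"
      using q1 u4 by (simp add: log_mult_pos log_divide_pos)
    finally show ?case unfolding u_def by simp
  qed
qed

lemma asym_lo2: "eventually (\<lambda>u::real. u - sqrt u - 1 \<ge> 2) at_top"
  by real_asymp

lemma lower_asym:
  assumes q2: "2 \<le> q" and e: "\<epsilon> > 0"
  shows "eventually (\<lambda>n. log q (log q (real n)) - log q 2 - \<epsilon> \<le> min_redundancy q n) sequentially"
proof -
  define G where "G u = 2 / (u - sqrt u - 1) + exp (- (2 powr sqrt u) / 2)" for u :: real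
  have q1: "real q > 1" using q2 by simp
  have qe: "1 < real q powr \<epsilon>" using q1 e by simp
  have "eventually (\<lambda>u. G u / (2 / u) < real q powr \<epsilon>) at_top"
    using order_tendstoD(2)[OF asym_lo1 qe] unfolding G_def by simp
  moreover have "eventually (\<lambda>u::real. u - sqrt u - 1 \<ge> 2) at_top" by (rule asym_lo2)
  moreover have "eventually (\<lambda>u::real. u \<ge> 4) at_top" by (rule eventually_ge_at_top)
  ultimately have "eventually (\<lambda>u. G u / (2 / u) < real q powr \<epsilon> \<and> u - sqrt u - 1 \<ge> 2 \<and> u \<ge> 4) at_top"
    by eventually_elim auto
  hence ev1: "eventually (\<lambda>n. G (log q (real n)) / (2 / log q (real n)) < real q powr \<epsilon> \<and>
      log q (real n) - sqrt (log q (real n)) - 1 \<ge> 2 \<and> log q (real n) \<ge> 4) sequentially"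
    using asym_ell[OF q1] unfolding filterlim_iff by blast
  have ev2: "eventually (\<lambda>n::nat. log q (real n) + sqrt (log q (real n)) + 1 \<le> real n / 2) sequentially"
    using asym_n1[OF q1] by simp
  have ev3: "eventually (\<lambda>n::nat. n \<ge> 1) sequentially" by (rule eventually_ge_at_top)
  show ?thesis
    using ev1 ev2 ev3
  proof eventually_elim
    case (elim n)
    define u where "u = log q (real n)"
    have u4: "u \<ge> 4" and u2: "u - sqrt u - 1 \<ge> 2" and rat: "G u / (2 / u) < real q powr \<epsilon>"
      and un: "u + sqrt u + 1 \<le> real n / 2" and n1: "n \<ge> 1"
      using elim unfolding u_def by auto
    have npos: "0 < real n" using n1 by simp
    have su: "0 \<le> sqrt u" using u4 by simp
    define L where "L = nat \<lfloor>u - sqrt u\<rfloor>"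
    have L1: "real L \<le> u - sqrt u" unfolding L_def using u2 by linarith
    have L2': "u - sqrt u - 1 \<le> real L" unfolding L_def using u2 by linarith
    have L2: "2 \<le> L" using L2' u2 by linarith
    have Lpos: "0 < real L" using L2 by simp
    define B where "B = n div L"
    have BL: "B * L \<le> n" unfolding B_def by (metis div_mult_mod_eq le_add1)
    define h where "h = card {m. even m \<and> m < L}"
    have hL: "real L \<le> 2 * real h" using evens_card_ge[of L] unfolding h_def
      by (metis of_nat_le_iff of_nat_mult of_nat_numeral)
    have hpos: "0 < real h" using hL Lpos by linarith
    define \<rho> where "\<rho> = real (q * (q - 1) * h) / real q ^ L"
    have qL: "0 < real q ^ L" using q1 by simp
    have r0: "0 \<le> \<rho>" unfolding \<rho>_def using qL by simp
    have "real (q * (q - 1) * h) \<le> real (q ^ L)" using Tle_export[OF L2, of q] unfolding h_def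
      by (simp only: of_nat_le_iff)
    hence r1: "\<rho> \<le> 1" unfolding \<rho>_def using qL by simp
    define \<Phi> where "\<Phi> = 1 / real h + (1 - \<rho>) ^ B"
    have low: "- log q \<Phi> \<le> min_redundancy q n"
      using lower_main[OF q2 L2 BL] unfolding \<Phi>_def \<rho>_def h_def .
    have b1: "1 / real h \<le> 2 / (u - sqrt u - 1)"
    proof -
      have "1 / real h \<le> 2 / real L" using hL hpos Lpos by (simp add: field_simps)
      also have "\<dots> \<le> 2 / (u - sqrt u - 1)" using L2' u2 by (intro divide_left_mono) auto
      finally show ?thesis .
    qed
    have rB: "2 powr sqrt u / 2 \<le> \<rho> * real B"
    proof -
      have "2 * 1 \<le> q * (q - 1)" using q2 by (intro mult_le_mono) auto
      hence "2 * h \<le> q * (q - 1) * h" by (intro mult_right_mono) auto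
      hence "real (2 * h) \<le> real (q * (q - 1) * h)" by (simp only: of_nat_le_iff)
      hence qh: "real L \<le> real (q * (q - 1) * h)" using hL by simp
      have "n = B * L + n mod L" unfolding B_def by simp
      moreover have "n mod L < L" using L2 by simp
      ultimately have "real n \<le> real B * real L + real L"
        by (metis (mono_tags, lifting) add_le_mono less_imp_le_nat of_nat_add of_nat_le_iff of_nat_mult order_refl)
      hence nBL: "real n - real L \<le> real B * real L" by simp
      have "real L \<le> u" using L1 su by linarith
      hence nL: "real n / 2 \<le> real n - real L" using un su by linarith
      have "real q ^ L = real q powr real L" using q1 by (simp add: powr_realpow)
      also have "\<dots> \<le> real q powr (u - sqrt u)" using L1 q1 by (intro powr_mono) auto
      also have "\<dots> = real n / real q powr sqrt u" unfolding u_def using npos q1 by (simp add: powr_diff)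
      finally have qLn: "real q ^ L \<le> real n / real q powr sqrt u" .
      have qs: "0 < real q powr sqrt u" using q1 by simp
      have "2 powr sqrt u / 2 \<le> real q powr sqrt u / 2" using q2 su by (intro divide_right_mono powr_mono2) auto
      also have "\<dots> = (real n / 2) / (real n / real q powr sqrt u)" using npos qs by (simp add: field_simps)
      also have "\<dots> \<le> (real B * real L) / (real n / real q powr sqrt u)"
        using nL nBL npos qs by (intro divide_right_mono) auto
      also have "\<dots> \<le> (real B * real L) / real q ^ L"
        using qLn qL Lpos npos qs by (intro divide_left_mono) auto
      also have "\<dots> \<le> (real B * real (q * (q - 1) * h)) / real q ^ L"
        using qh qL by (intro divide_right_mono mult_left_mono) auto
      also have "\<dots> = \<rho> * real B" unfolding \<rho>_def by simp
      finally show ?thesis .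
    qed
    have b2: "(1 - \<rho>) ^ B \<le> exp (- (2 powr sqrt u) / 2)"
    proof -
      have "1 - \<rho> \<le> exp (- \<rho>)" using exp_ge_add_one_self[of "- \<rho>"] by simp
      hence "(1 - \<rho>) ^ B \<le> exp (- \<rho>) ^ B" using r1 by (intro power_mono) auto
      also have "\<dots> = exp (- (\<rho> * real B))" by (simp add: exp_of_nat_mult[symmetric] mult.commute)
      also have "\<dots> \<le> exp (- (2 powr sqrt u) / 2)" using rB by simp
      finally show ?thesis .
    qed
    have PG: "\<Phi> \<le> G u" unfolding \<Phi>_def G_def using b1 b2 by simp
    have Ppos: "0 < \<Phi>" unfolding \<Phi>_def using hpos r1 by (simp add: add_pos_nonneg)
    have "G u < real q powr \<epsilon> * (2 / u)"
    proof -
      have "0 < 2 / u" using u4 by simp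
      thus ?thesis using rat pos_divide_less_eq by blast
    qed
    hence "log q \<Phi> \<le> log q (real q powr \<epsilon> * (2 / u))"
      using PG Ppos q1 by (intro log_mono) auto
    also have "\<dots> = \<epsilon> + log q 2 - log q u"
      using q1 u4 by (simp add: log_mult_pos log_divide_pos)
    finally show ?case using low unfolding u_def by simp
  qed
qed

theorem corollary4:
  fixes q :: nat
  assumes "q \<ge> 2"
  shows "\<forall>\<epsilon>>0. eventually (\<lambda>n.
            log q (log q (real n)) - log q 2 - \<epsilon> \<le> min_redundancy q n \<and>
            min_redundancy q n \<le> log q (log q (real n)) + min (log q (real q - 1) - log q 2) 0 + \<epsilon>)
          sequentially"
proof (intro allI impI)
  fix \<epsilon> :: real assume e: "\<epsilon> > 0"
  have q1: "real q > 1" using assms by simp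
  have l2: "0 \<le> log q 2" using q1 by simp
  have lq: "0 \<le> log q (real q - 1)" using q1 assms by simp
  have mn: "- log q 2 \<le> min (log q (real q - 1) - log q 2) 0" using l2 lq by simp
  show "eventually (\<lambda>n.
            log q (log q (real n)) - log q 2 - \<epsilon> \<le> min_redundancy q n \<and>
            min_redundancy q n \<le> log q (log q (real n)) + min (log q (real q - 1) - log q 2) 0 + \<epsilon>)
          sequentially"
    using lower_asym[OF assms e] upper_asym[OF assms e]
  proof eventually_elim
    case (elim n)
    thus ?case using mn by linarith
  qed
qed

end
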